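(* Let $\pi_1,\dots,\pi_n>0$ with $\sum_i\pi_i=1$ and $\pi_*=\min_i\pi_i$. For every $\epsilon\in(0,1)$ there exist $m\in\mathbb{N}$ and a univariate polynomial $p\in\mathbb{R}[t]$ such that (i) $p(t)\ge 2t^2\,\overline{r_m}(t)$ for all $t\in[0,\pi_*^{-1/2}]$, and (ii) $\sum_{i=1}^n\pi_i\,p(x_i)\le(1+\epsilon)\,\mathrm{Ent}_\pi[x^2]$ for all $x\in S^\pi$.
   Context: $\|x\|_\pi^2=\sum_i\pi_ix_i^2$, $\mathrm{Ent}_\pi[x^2]=\sum_i\pi_ix_i^2\log(x_i^2/\|x\|_\pi^2)$, and $S^\pi=\{x\in\mathbb{R}^n_{\ge0}:\|x\|_\pi^2=1\}$. For $m\ge0$, $\overline{r_m}(t)$ is the $(m+1,m)$ Padé approximant of $\log t$ at $t=1$: the rational function $R/S$ with $\deg R\le m+1$, $\deg S\le m$, $S(1)=1$ and $\log t-R(t)/S(t)=O((t-1)^{2m+2})$ as $t\to 1$. (Its denominator is positive on $(0,\infty)$ and $\overline{r_m}(t)\ge\log t$ for $t>0$.) *)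

theory Defs
  imports "HOL-Analysis.Analysis" "HOL-Computational_Algebra.Polynomial" "HOL-Library.Landau_Symbols"
begin

text \<open>It is R/S with deg R \<le> m+1, deg S \<le> m, S(1) = 1,
  and ln t - R t / S t = O((t-1)^(2m+2)) as t \<rightarrow> 1.  The denominator is
  nonzero on (0,\<infinity>), which makes the function uniquely determined there.\<close>
definition pade_log :: "nat \<Rightarrow> real \<Rightarrow> real" where
  "pade_log m = (THE f. \<exists>R S :: real poly.
      degree R \<le> m + 1 \<and> degree S \<le> m \<and> poly S 1 = 1 \<and>
      (\<forall>t>0. poly S t \<noteq> 0) \<and>
      (\<lambda>t. ln t - poly R t / poly S t) \<in> O[at 1](\<lambda>t. (t - 1) ^ (2 * m + 2)) \<and>
      f = (\<lambda>t. if t > 0 then poly R t / poly S t else 0))"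

definition pi_norm2 :: "nat \<Rightarrow> (nat \<Rightarrow> real) \<Rightarrow> (nat \<Rightarrow> real) \<Rightarrow> real" where
  "pi_norm2 n \<pi> x = (\<Sum>i<n. \<pi> i * (x i)\<^sup>2)"

definition ent_sq :: "nat \<Rightarrow> (nat \<Rightarrow> real) \<Rightarrow> (nat \<Rightarrow> real) \<Rightarrow> real" where
  "ent_sq n \<pi> x = (\<Sum>i<n. \<pi> i * (x i)\<^sup>2 * ln ((x i)\<^sup>2 / pi_norm2 n \<pi> x))"

definition pi_sphere :: "nat \<Rightarrow> (nat \<Rightarrow> real) \<Rightarrow> (nat \<Rightarrow> real) set" where
  "pi_sphere n \<pi> = {x. (\<forall>i<n. x i \<ge> 0) \<and> pi_norm2 n \<pi> x = 1}"

end

theory Submission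
  imports Defs
begin


definition hs :: "nat \<Rightarrow> real" where "hs n = (\<Sum>i\<in>{1..n}. 1 / real i)"

lemma hs_Suc: "hs (Suc n) = hs n + 1 / real (Suc n)"
  by (simp add: hs_def)

definition Mld :: "nat \<Rightarrow> nat \<Rightarrow> real \<Rightarrow> real" where
  "Mld l k x = (if k \<le> l then (fact l / fact (l-k)) * x^(l-k) * (ln x + hs l - hs (l-k))
     else (-1)^(k-l-1) * fact l * fact (k-l-1) / x^(k-l))"

lemma Mld_0: "Mld l 0 x = x^l * ln x"
  by (simp add: Mld_def)

lemma pw: "real j * (x::real) ^ (j - Suc 0) * x = real j * x^j"
  by (cases j) auto

lemma d1: "(x::real) > 0 \<Longrightarrow> ((\<lambda>y. c * y^(Suc j) * (ln y + a)) has_real_derivative c*(real(Suc j)*x^j)*(ln x + a) + c*x^j) (at x)"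
  apply (auto intro!: derivative_eq_intros simp: pw)
  by (simp add: field_simps)

lemma d2: "(x::real) > 0 \<Longrightarrow> ((\<lambda>y. C / y^(Suc j)) has_real_derivative - C*real(Suc j)/x^(Suc(Suc j))) (at x)"
  apply (auto intro!: derivative_eq_intros simp: pw)
  by (simp add: field_simps)

lemma Mld_deriv:
  assumes x: "x > 0"
  shows "(Mld l k has_real_derivative Mld l (Suc k) x) (at x)"
proof (cases "k < l")
  case True
  then obtain j where j: "l - k = Suc j" by (metis Suc_diff_Suc)
  have ljk: "l - Suc k = j" using j by simp
  have eq: "\<And>y. Mld l k y = (fact l / fact (Suc j)) * y^(Suc j) * (ln y + hs l - hs (Suc j))"
    using True j by (simp add: Mld_def)
  have "((\<lambda>y. (fact l / fact (Suc j)) * y^(Suc j) * (ln y + hs l - hs (Suc j))) has_real_derivative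
        (fact l / fact (Suc j)) * (real (Suc j) * x^j) * (ln x + hs l - hs (Suc j))
        + (fact l / fact (Suc j)) * x^(Suc j) * (1/x)) (at x)"
    using d1[OF x, of "fact l / fact (Suc j)" j "hs l - hs (Suc j)"] x by (simp add: add_diff_eq)
  moreover have "(fact l / fact (Suc j)) * (real (Suc j) * x^j) * (ln x + hs l - hs (Suc j))
        + (fact l / fact (Suc j)) * x^(Suc j) * (1/x) = Mld l (Suc k) x"
  proof -
    have f: "(fact (Suc j) :: real) = real (Suc j) * fact j" by simp
    have "Mld l (Suc k) x = (fact l / fact j) * x^j * (ln x + hs l - hs j)"
      using True ljk by (simp add: Mld_def)
    also have "\<dots> = (fact l / fact (Suc j)) * (real (Suc j) * x^j) * (ln x + hs l - hs (Suc j))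
        + (fact l / fact (Suc j)) * x^(Suc j) * (1/x)"
    proof -
      have g: "\<And>K s y A. (s::real) > 0 \<Longrightarrow> (K/s)*(s*y)*(A - 1/s) + (K/s)*y = K*y*A"
        by (simp add: field_simps)
      have c: "fact l / fact (Suc j) = (fact l / fact j) / real (Suc j)"
        unfolding f by simp
      have c2: "x^(Suc j)*(1/x) = x^j" using x by simp
      have e1: "ln x + hs l - (hs j + 1/real(Suc j)) = (ln x + hs l - hs j) - 1/real(Suc j)" by simp
      have e2: "(fact l / fact j / real (Suc j)) * x^(Suc j) * (1/x) = (fact l / fact j / real (Suc j)) * x^j"
        using c2 by (simp only: mult.assoc)
      show ?thesis unfolding c hs_Suc e1 e2
        using g[of "real (Suc j)" "fact l / fact j" "x^j" "ln x + hs l - hs j"] by simp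
    qed
    finally show ?thesis by simp
  qed
  ultimately show ?thesis unfolding eq[abs_def] by simp
next
  case False
  show ?thesis
  proof (cases "k = l")
    case True
    have eq: "Mld l k = (\<lambda>y. fact l * (ln y + hs l))"
      using True by (auto simp: Mld_def hs_def)
    have "((\<lambda>y. fact l * (ln y + hs l)) has_real_derivative fact l * (1/x)) (at x)"
      using x by (auto intro!: derivative_eq_intros)
    moreover have "Mld l (Suc k) x = fact l * (1/x)"
      using True by (simp add: Mld_def)
    ultimately show ?thesis unfolding eq by simp
  next
    case False2: False
    then have kl: "k > l" using False by simp
    then obtain j where j: "k - l = Suc j" by (metis Suc_diff_Suc zero_less_diff not0_implies_Suc less_imp_Suc_add diff_Suc_1 add_diff_cancel_left')
    have eq: "Mld l k = (\<lambda>y. ((-1)^j * fact l * fact j) / y^(Suc j))"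
      using kl j by (auto simp: Mld_def)
    have "Mld l (Suc k) x = - ((-1)^j * fact l * fact j)*real(Suc j)/x^(Suc(Suc j))"
      using kl j by (simp add: Mld_def Suc_diff_le)
    then show ?thesis unfolding eq using d2[OF x, of "(-1)^j * fact l * fact j" j] by simp
  qed
qed


lemma pw2: "real j * (x::real) ^ (j - Suc 0) * x = real j * x^j"
  by (cases j) auto

lemma dterm: "F \<noteq> 0 \<Longrightarrow> (f has_real_derivative f') (at s) \<Longrightarrow>
  ((\<lambda>y. f y * (t-y)^(Suc n) / F) has_real_derivative (f' * (t-s)^(Suc n) + f s * (real (Suc n) * (t-s)^n * (-1))) / F) (at s)"
proof -
  assume F: "F \<noteq> 0" and d: "(f has_real_derivative f') (at s)"
  have h1: "((\<lambda>y. (t - y)^(Suc n)) has_real_derivative (1 + real n) * ((-1) * (t-s)^n)) (at s)"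
    by (rule DERIV_power_Suc) (auto intro!: derivative_eq_intros)
  have "((\<lambda>y. f y * (t-y)^(Suc n)) has_real_derivative f' * (t-s)^(Suc n) + f s * ((1 + real n) * ((-1) * (t-s)^n))) (at s)"
    using DERIV_mult[OF d h1] by (simp add: algebra_simps)
  from DERIV_cdivide[OF this, of F] show ?thesis by (simp add: algebra_simps)
qed

lemma galg: "(fn::real) > 0 \<Longrightarrow> N \<ge> 0 \<Longrightarrow> A*w/fn + (B*(u*w) + A*((N+1)*w*(-1)))/((N+1)*fn) = B*(u*w)/((N+1)*fn)"
proof -
  assume a: "fn > 0" "N \<ge> 0"
  then have "(N+1)*fn > 0" by simp
  have e: "A*((N+1)*w*(-1))/((N+1)*fn) = - (A*w/fn)"
    using a by simp
  have "(B*(u*w) + A*((N+1)*w*(-1)))/((N+1)*fn) = B*(u*w)/((N+1)*fn) + A*((N+1)*w*(-1))/((N+1)*fn)"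
    by (rule add_divide_distrib)
  then have "(B*(u*w) + A*((N+1)*w*(-1)))/((N+1)*fn) = B*(u*w)/((N+1)*fn) - A*w/fn"
    using e by simp
  then show ?thesis by simp
qed

lemma taylor_g_deriv:
  fixes D :: "nat \<Rightarrow> real \<Rightarrow> real"
  assumes der: "\<And>k. k \<le> n \<Longrightarrow> (D k has_real_derivative D (Suc k) s) (at s)"
  shows "((\<lambda>y. \<Sum>k\<le>n. D k y * (t - y)^k / fact k) has_real_derivative
            D (Suc n) s * (t - s)^n / fact n) (at s)"
  using der
proof (induction n)
  case 0
  then show ?case by simp
next
  case (Suc n)
  have IH: "((\<lambda>y. \<Sum>k\<le>n. D k y * (t - y)^k / fact k) has_real_derivative
            D (Suc n) s * (t - s)^n / fact n) (at s)"
    using Suc by simp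
  have d: "(D (Suc n) has_real_derivative D (Suc (Suc n)) s) (at s)" using Suc.prems by simp
  have "((\<lambda>y. D (Suc n) y * (t - y)^(Suc n) / fact (Suc n)) has_real_derivative
       (D (Suc (Suc n)) s * (t - s)^(Suc n) + D (Suc n) s * (real (Suc n) * (t-s)^n * (-1))) / fact (Suc n)) (at s)"
    by (rule dterm[OF _ d]) simp
  from DERIV_add[OF IH this]
  have "((\<lambda>y. (\<Sum>k\<le>n. D k y * (t - y)^k / fact k) + D (Suc n) y * (t - y)^(Suc n) / fact (Suc n)) has_real_derivative
     D (Suc n) s * (t - s)^n / fact n + (D (Suc (Suc n)) s * (t - s)^(Suc n) + D (Suc n) s * (real (Suc n) * (t-s)^n * (-1))) / fact (Suc n)) (at s)" .
  moreover have "D (Suc n) s * (t - s)^n / fact n + (D (Suc (Suc n)) s * (t - s)^(Suc n) + D (Suc n) s * (real (Suc n) * (t-s)^n * (-1))) / fact (Suc n)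
     = D (Suc (Suc n)) s * (t - s)^(Suc n) / fact (Suc n)"
  proof -
    have f: "(fact (Suc n)::real) = real (Suc n) * fact n" by simp
    have p: "fact n > (0::real)" by simp
    show ?thesis unfolding f using galg[OF p, of "real n" "D (Suc n) s" "(t-s)^n" "D (Suc (Suc n)) s" "t - s"]
      by (simp add: algebra_simps)
  qed
  ultimately show ?case by simp
qed

lemma taylor_cauchy:
  fixes D :: "nat \<Rightarrow> real \<Rightarrow> real"
  assumes der: "\<And>k x. k \<le> n \<Longrightarrow> min c t \<le> x \<Longrightarrow> x \<le> max c t \<Longrightarrow>
                    (D k has_real_derivative D (Suc k) x) (at x)"
    and ct: "c \<noteq> t"
  shows "\<exists>\<xi>. min c t < \<xi> \<and> \<xi> < max c t \<and>
     D 0 t = (\<Sum>k\<le>n. D k c * (t - c)^k / fact k) + D (Suc n) \<xi> * (t - \<xi>)^n * (t - c) / fact n"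
proof -
  define g where "g = (\<lambda>y. \<Sum>k\<le>n. D k y * (t - y)^k / fact k)"
  have gd: "\<And>x. min c t \<le> x \<Longrightarrow> x \<le> max c t \<Longrightarrow>
      (g has_real_derivative D (Suc n) x * (t - x)^n / fact n) (at x)"
    unfolding g_def by (rule taylor_g_deriv) (auto intro: der)
  have gt: "g t = D 0 t"
    unfolding g_def by (simp add: zero_power)
  have "\<exists>z. min c t < z \<and> z < max c t \<and> g (max c t) - g (min c t) = (max c t - min c t) * (D (Suc n) z * (t - z)^n / fact n)"
    by (rule MVT2) (use ct gd in auto)
  then obtain z where z: "min c t < z" "z < max c t"
     "g (max c t) - g (min c t) = (max c t - min c t) * (D (Suc n) z * (t - z)^n / fact n)" by blast
  define K where "K = D (Suc n) z * (t - z)^n / fact n"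
  have "g t - g c = (t - c) * K"
    using z(3) unfolding K_def[symmetric] by (cases "c < t") (auto simp: min_def max_def algebra_simps split: if_splits)
  then have "g t - g c = (t - c) * (D (Suc n) z * (t - z)^n / fact n)" unfolding K_def .
  then have "D 0 t = g c + D (Suc n) z * (t - z)^n * (t - c) / fact n"
    using gt by (simp add: algebra_simps)
  then show ?thesis using z(1,2) unfolding g_def by blast
qed


definition sc :: "nat \<Rightarrow> nat \<Rightarrow> real" where "sc m l = real (m choose l) * real (Suc m choose l)"
definition Sb :: "nat \<Rightarrow> real \<Rightarrow> real" where "Sb m x = (\<Sum>l\<le>m. sc m l * x^l)"
definition Fd :: "nat \<Rightarrow> nat \<Rightarrow> real \<Rightarrow> real" where "Fd m k x = (\<Sum>l\<le>m. sc m l * Mld l k x)"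
definition Rb :: "nat \<Rightarrow> real \<Rightarrow> real" where "Rb m x = (\<Sum>k\<le>Suc m. Fd m k 1 * (x - 1)^k / fact k)"

lemma Fd_0: "Fd m 0 x = Sb m x * ln x"
  by (simp add: Fd_def Sb_def Mld_0 sum_distrib_right mult.assoc)

lemma Fd_deriv: "x > 0 \<Longrightarrow> (Fd m k has_real_derivative Fd m (Suc k) x) (at x)"
  unfolding Fd_def[abs_def]
  by (auto intro!: derivative_eq_intros Mld_deriv simp: Fd_def ac_simps)

lemma sc_fact: "l \<le> m \<Longrightarrow> sc m l * fact l * fact (Suc m - l) = real (m choose l) * fact (Suc m)"
proof -
  assume l: "l \<le> m"
  have "fact l * fact (Suc m - l) * (Suc m choose l) = (fact (Suc m) :: nat)"
    by (rule binomial_fact_lemma) (use l in simp)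
  then have "(fact l * fact (Suc m - l) * real (Suc m choose l)) = (fact (Suc m) :: real)"
    by (metis of_nat_fact of_nat_mult)
  then show ?thesis unfolding sc_def by (simp add: ac_simps del: fact_Suc)
qed

lemma galg2: "(X::real) > 0 \<Longrightarrow> y > 0 \<Longrightarrow> scc * fl * ff = C * F \<Longrightarrow>
   scc * ((-a) * fl * ff / X) = - F / (X * y) * (C * y * a)"
proof -
  assume a: "X > 0" "y > 0" "scc * fl * ff = C * F"
  have "scc * ((-a) * fl * ff / X) = - (a * (scc * fl * ff)) / X" by (simp add: algebra_simps)
  also have "\<dots> = - (a * (C * F)) / X" using a(3) by simp
  also have "\<dots> = - F / (X * y) * (C * y * a)" using a(1,2) by (simp add: field_simps)
  finally show ?thesis .
qed

lemma Fd_top: assumes x: "x > 0" shows "Fd m (Suc (Suc m)) x = - fact (Suc m) * (x - 1)^m / x^(Suc (Suc m))"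
proof -
  have "Fd m (Suc (Suc m)) x = (\<Sum>l\<le>m. sc m l * ((-1)^(Suc m - l) * fact l * fact (Suc m - l) / x^(Suc (Suc m) - l)))"
    unfolding Fd_def by (rule sum.cong) (auto simp: Mld_def)
  also have "\<dots> = (\<Sum>l\<le>m. - fact (Suc m) / x^(Suc (Suc m)) * (real (m choose l) * x^l * (-1)^(m - l)))"
  proof (rule sum.cong[OF refl])
    fix l assume "l \<in> {..m}"
    then have l: "l \<le> m" by simp
    have p: "x^(Suc (Suc m)) = x^(Suc (Suc m) - l) * x^l"
      using l by (simp add: power_add[symmetric])
    have s: "(-1::real)^(Suc m - l) = - ((-1)^(m - l))"
      using l by (simp add: Suc_diff_le)
    show "sc m l * ((-1)^(Suc m - l) * fact l * fact (Suc m - l) / x^(Suc (Suc m) - l)) =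
          - fact (Suc m) / x^(Suc (Suc m)) * (real (m choose l) * x^l * (-1)^(m - l))"
      unfolding p s using galg2[of "x^(Suc (Suc m) - l)" "x^l" "sc m l" "fact l" "fact (Suc m - l)" "real (m choose l)" "fact (Suc m)" "(-1)^(m-l)"] sc_fact[OF l] x
      by (simp del: fact_Suc)
  qed
  also have "\<dots> = - fact (Suc m) / x^(Suc (Suc m)) * (x + (-1))^m"
  proof -
    have "(x + (-1))^m = (\<Sum>l\<le>m. real (m choose l) * x^l * (-1)^(m - l))"
      by (rule binomial_ring)
    then show ?thesis by (simp only: sum_distrib_left)
  qed
  finally show ?thesis by simp
qed


lemma E_repr:
  assumes t: "t > 0" "t \<noteq> 1"
  shows "\<exists>\<xi>. min 1 t < \<xi> \<and> \<xi> < max 1 t \<and>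
     Sb m t * ln t - Rb m t = - ((\<xi>-1)^m * (t-\<xi>)^(Suc m) * (t-1) / \<xi>^(Suc (Suc m)))"
proof -
  have der: "\<And>k x. k \<le> Suc m \<Longrightarrow> min 1 t \<le> x \<Longrightarrow> x \<le> max 1 t \<Longrightarrow>
        (Fd m k has_real_derivative Fd m (Suc k) x) (at x)"
    by (rule Fd_deriv) (use t in \<open>auto simp: min_def split: if_splits\<close>)
  obtain \<xi> where xi: "min 1 t < \<xi>" "\<xi> < max 1 t"
    "Fd m 0 t = (\<Sum>k\<le>Suc m. Fd m k 1 * (t - 1)^k / fact k) + Fd m (Suc (Suc m)) \<xi> * (t - \<xi>)^(Suc m) * (t - 1) / fact (Suc m)"
    using taylor_cauchy[of "Suc m" 1 t "Fd m", OF der] t by blast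
  have xp: "\<xi> > 0" using xi t by (auto simp: min_def split: if_splits)
  have "Sb m t * ln t - Rb m t = Fd m (Suc (Suc m)) \<xi> * (t - \<xi>)^(Suc m) * (t - 1) / fact (Suc m)"
    using xi(3) unfolding Fd_0 Rb_def by simp
  also have "\<dots> = - ((\<xi>-1)^m * (t-\<xi>)^(Suc m) * (t-1) / \<xi>^(Suc (Suc m)))"
    unfolding Fd_top[OF xp] by (simp del: fact_Suc)
  finally show ?thesis using xi by blast
qed


lemma absalg: "(x::real) > 0 \<Longrightarrow> \<bar>-(A^m*B^(Suc m)*C/x^(Suc(Suc m)))\<bar> = (\<bar>A\<bar>*\<bar>B\<bar>/x)^m * (\<bar>B\<bar>*\<bar>C\<bar>/x^2)"
proof -
  assume x: "x > 0"
  have "\<bar>-(A^m*B^(Suc m)*C/x^(Suc(Suc m)))\<bar> = \<bar>A\<bar>^m*\<bar>B\<bar>^m*\<bar>B\<bar>*\<bar>C\<bar>/(x^m*x^2)"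
    using x by (simp add: abs_mult abs_divide power_abs power2_eq_square ac_simps)
  also have "\<dots> = (\<bar>A\<bar>*\<bar>B\<bar>/x)^m * (\<bar>B\<bar>*\<bar>C\<bar>/x^2)"
    by (simp add: power_mult_distrib power_divide)
  finally show ?thesis .
qed
lemma e: fixes t \<xi> :: real assumes "min 1 t < \<xi>" "\<xi> < max 1 t"
  shows "\<bar>\<xi> - 1\<bar> * \<bar>t - \<xi>\<bar> = (1 - \<xi>) * (\<xi> - t)"
proof (cases "t < 1")
  case True
  then have "t < \<xi>" "\<xi> < 1" using assms by (auto simp: min_def max_def)
  then show ?thesis by simp
next
  case False
  then have "1 < \<xi>" "\<xi> < t" using assms by (auto simp: min_def max_def)
  then have "\<bar>\<xi> - 1\<bar> = -(1 - \<xi>)" "\<bar>t - \<xi>\<bar> = -(\<xi> - t)" by auto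
  then show ?thesis by (simp add: algebra_simps)
qed

lemma key_ineq:
  assumes "min 1 t < \<xi>" "\<xi> < max 1 t" "t > 0"
  shows "\<bar>\<xi> - 1\<bar> * \<bar>t - \<xi>\<bar> \<le> \<xi> * (sqrt t - 1)^2"
proof -
  have e: "\<bar>\<xi> - 1\<bar> * \<bar>t - \<xi>\<bar> = (1 - \<xi>) * (\<xi> - t)"
    using e[OF assms(1,2)] .
  have st: "(sqrt t)^2 = t" using assms by simp
  have "\<xi> * (sqrt t - 1)^2 - (1 - \<xi>) * (\<xi> - t) = (\<xi> - sqrt t)^2"
    using st by (simp add: power2_eq_square algebra_simps)
  then show ?thesis unfolding e by (smt (verit) zero_le_power2)
qed

lemma E_bound:
  assumes t: "t > 0" "t \<noteq> 1"
  shows "\<exists>\<xi>. min 1 t < \<xi> \<and> \<xi> < max 1 t \<and>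
     \<bar>Sb m t * ln t - Rb m t\<bar> \<le> (sqrt t - 1)^(2*m) * (\<bar>t - \<xi>\<bar> * \<bar>t - 1\<bar> / \<xi>^2)"
proof -
  obtain \<xi> where xi: "min 1 t < \<xi>" "\<xi> < max 1 t"
     "Sb m t * ln t - Rb m t = - ((\<xi>-1)^m * (t-\<xi>)^(Suc m) * (t-1) / \<xi>^(Suc (Suc m)))"
    using E_repr[OF t] by blast
  have xp: "\<xi> > 0" using xi t by (auto simp: min_def split: if_splits)
  have "\<bar>Sb m t * ln t - Rb m t\<bar> = (\<bar>\<xi>-1\<bar> * \<bar>t-\<xi>\<bar> / \<xi>)^m * (\<bar>t - \<xi>\<bar> * \<bar>t - 1\<bar> / \<xi>^2)"
    unfolding xi(3) using absalg[OF xp] by simp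
  also have "\<dots> \<le> ((sqrt t - 1)^2)^m * (\<bar>t - \<xi>\<bar> * \<bar>t - 1\<bar> / \<xi>^2)"
  proof (rule mult_right_mono)
    show "(\<bar>\<xi>-1\<bar> * \<bar>t-\<xi>\<bar> / \<xi>)^m \<le> ((sqrt t - 1)^2)^m"
      by (rule power_mono) (use key_ineq[OF xi(1,2) t(1)] xp in \<open>auto simp: divide_le_eq mult.commute\<close>)
  qed simp
  finally show ?thesis using xi by (auto simp: power_mult)
qed


lemma Sb_ge1: "t \<ge> 0 \<Longrightarrow> Sb m t \<ge> 1"
proof -
  assume t: "t \<ge> 0"
  have "Sb m t = sc m 0 * t^0 + (\<Sum>l\<in>{..m}-{0}. sc m l * t^l)"
    unfolding Sb_def by (subst sum.remove[of _ 0]) auto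
  moreover have "(\<Sum>l\<in>{..m}-{0}. sc m l * t^l) \<ge> 0"
    using t by (intro sum_nonneg) (auto simp: sc_def)
  ultimately show ?thesis by (simp add: sc_def)
qed

lemma Sb_ge_top: "t \<ge> 0 \<Longrightarrow> Sb m t \<ge> (real m + 1) * t^m"
proof -
  assume t: "t \<ge> 0"
  have "Sb m t = sc m m * t^m + (\<Sum>l\<in>{..m}-{m}. sc m l * t^l)"
    unfolding Sb_def by (subst sum.remove[of _ m]) auto
  moreover have "(\<Sum>l\<in>{..m}-{m}. sc m l * t^l) \<ge> 0"
    using t by (intro sum_nonneg) (auto simp: sc_def)
  ultimately show ?thesis by (simp add: sc_def algebra_simps)
qed

lemma bern: "0 \<le> a \<Longrightarrow> a \<le> 1 \<Longrightarrow> (1 - a)^K * (1 + real K * a) \<le> (1::real)"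
proof (induction K)
  case 0 then show ?case by simp
next
  case (Suc K)
  have "(1 - a)^(Suc K) * (1 + real (Suc K) * a) = (1 - a)^K * ((1 + real K * a) - (real K + 1) * a^2)"
    by (simp add: algebra_simps power2_eq_square)
  also have "\<dots> \<le> (1 - a)^K * (1 + real K * a)"
    using Suc.prems by (intro mult_left_mono) auto
  also have "\<dots> \<le> 1" using Suc by simp
  finally show ?case .
qed

lemma bern2: "0 \<le> a \<Longrightarrow> a \<le> 1 \<Longrightarrow> K \<ge> 1 \<Longrightarrow> a * (1 - a)^K \<le> 1 / real K"
proof -
  assume a: "0 \<le> a" "a \<le> 1" and K: "K \<ge> 1"
  have b: "(1 - a)^K * (1 + real K * a) \<le> 1" by (rule bern) (use a in auto)
  have "real K * (a * (1 - a)^K) \<le> (1 - a)^K * (1 + real K * a)"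
    using a by (simp add: algebra_simps)
  then have "real K * (a * (1 - a)^K) \<le> 1" using b by linarith
  then show ?thesis using K by (simp add: field_simps mult.commute)
qed

lemma r_bound:
  fixes t M \<epsilon> :: real
  assumes t: "0 < t" "t \<le> M" and M: "1 \<le> M" and e: "0 < \<epsilon>"
    and m1: "1 \<le> m" and c1: "8 \<le> \<epsilon> * (2 * real m - 1)" and c2: "8 * M^2 \<le> \<epsilon> * (real m + 1)"
  shows "2 * t^2 * (Rb m t / Sb m t - ln t) \<le> \<epsilon> / 4 * (t - 1)^2"
proof (cases "t = 1")
  case True
  have "Rb m 1 = 0"
  proof -
    have "Rb m 1 = Fd m 0 1" unfolding Rb_def by (simp add: zero_power)
    also have "\<dots> = 0" unfolding Fd_0 by simp
    finally show ?thesis .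
  qed
  then show ?thesis using True by simp
next
  case False
  have S1: "Sb m t \<ge> 1" using Sb_ge1[of t m] t by simp
  have Sp: "Sb m t > 0" using S1 by simp
  obtain \<xi> where xi: "min 1 t < \<xi>" "\<xi> < max 1 t"
    "\<bar>Sb m t * ln t - Rb m t\<bar> \<le> (sqrt t - 1)^(2*m) * (\<bar>t - \<xi>\<bar> * \<bar>t - 1\<bar> / \<xi>^2)"
    using E_bound[OF t(1) False] by blast
  have rl: "Rb m t / Sb m t - ln t \<le> \<bar>Sb m t * ln t - Rb m t\<bar> / Sb m t"
  proof -
    have "Rb m t / Sb m t - ln t = - (Sb m t * ln t - Rb m t) / Sb m t"
      using Sp by (simp add: field_simps)
    also have "\<dots> \<le> \<bar>Sb m t * ln t - Rb m t\<bar> / Sb m t"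
      using Sp by (intro divide_right_mono) auto
    finally show ?thesis .
  qed
  show ?thesis
  proof (cases "t < 1")
    case True
    have x: "t < \<xi>" "\<xi> < 1" using xi True by (auto simp: min_def max_def)
    have q1: "\<bar>t - \<xi>\<bar> \<le> \<xi>" using x t by simp
    have q2: "\<bar>t - 1\<bar> / \<xi> \<le> (1 - t) / t"
      using x t by (simp add: frac_le)
    have "\<bar>t - \<xi>\<bar> * \<bar>t - 1\<bar> / \<xi>^2 = (\<bar>t - \<xi>\<bar> / \<xi>) * (\<bar>t - 1\<bar> / \<xi>)"
      by (simp add: power2_eq_square)
    also have "\<dots> \<le> 1 * ((1 - t) / t)"
      using q1 q2 x t by (intro mult_mono) (auto simp: divide_le_eq)
    finally have q: "\<bar>t - \<xi>\<bar> * \<bar>t - 1\<bar> / \<xi>^2 \<le> (1 - t) / t" by simp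
    have E1: "\<bar>Sb m t * ln t - Rb m t\<bar> \<le> (1 - sqrt t)^(2*m) * ((1 - t) / t)"
    proof -
      have "(sqrt t - 1)^(2*m) = (1 - sqrt t)^(2*m)"
        by (simp add: power_mult power2_commute)
      moreover have nn: "0 \<le> (sqrt t - 1)^(2*m)" by (simp add: power_mult)
      ultimately show ?thesis using order_trans[OF xi(3) mult_left_mono[OF q nn]] by simp
    qed
    define a where "a = sqrt t"
    have a: "0 \<le> a" "a < 1" "a^2 = t" using t True by (auto simp: a_def)
    have "2 * t^2 * (Rb m t / Sb m t - ln t) \<le> 2 * t^2 * (\<bar>Sb m t * ln t - Rb m t\<bar> / Sb m t)"
      using rl by (intro mult_left_mono) auto
    also have "\<dots> \<le> 2 * t^2 * \<bar>Sb m t * ln t - Rb m t\<bar>"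
      using S1 by (intro mult_left_mono) (auto simp: divide_le_eq mult_le_cancel_left1)
    also have "\<dots> \<le> 2 * t^2 * ((1 - a)^(2*m) * ((1 - t) / t))"
      using E1 unfolding a_def by (intro mult_left_mono) auto
    also have "\<dots> = 2 * (a * (1 - a)^(2*m-1)) * a * (1 - a) * (1 - t)"
    proof -
      have "(1 - a)^(2*m) = (1 - a)^(2*m-1) * (1 - a)"
        using m1 by (metis Suc_diff_1 Suc_le_eq mult_pos_pos pos2 power_Suc2 less_le_trans zero_less_one)
      moreover have "\<And>P. a > 0 \<Longrightarrow> 2 * (a^2)^2 * (P * (1 - a) * ((1 - a^2) / a^2)) = 2 * (a * P) * a * (1 - a) * (1 - a^2)"
        by (simp add: field_simps power2_eq_square)
      moreover have "a > 0" using t a_def by simp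
      ultimately show ?thesis using a(3) by metis
    qed
    also have "\<dots> \<le> 2 * (1 / real (2*m-1)) * 1 * (1 - t) * (1 - t)"
    proof -
      have b: "a * (1 - a)^(2*m-1) \<le> 1 / real (2*m-1)"
        by (rule bern2) (use a m1 in auto)
      have c: "a * (1 - a) \<le> 1 - t"
        using a by (simp add: power2_eq_square algebra_simps)
      have "2 * (a * (1 - a)^(2*m-1)) * a * (1 - a) * (1 - t) = 2 * (a * (1 - a)^(2*m-1)) * (a * (1 - a)) * (1 - t)"
        by simp
      also have "\<dots> \<le> 2 * (1 / real (2*m-1)) * (1 - t) * (1 - t)"
        using b c a True by (intro mult_right_mono mult_mono) (auto simp: mult_nonneg_nonneg)
      finally show ?thesis by simp
    qed
    also have "\<dots> \<le> \<epsilon> / 4 * (t - 1)^2"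
    proof -
      have rm: "real (2*m-1) = 2 * real m - 1" using m1 by (simp add: of_nat_diff)
      have "2 * (1 / real (2*m-1)) \<le> \<epsilon> / 4"
        using c1 m1 unfolding rm by (simp add: field_simps)
      moreover have "(t - 1)^2 = (1 - t) * (1 - t)" by (simp add: power2_eq_square algebra_simps)
      moreover have "0 \<le> (1 - t) * (1 - t)" by simp
      ultimately show ?thesis using mult_right_mono by (metis mult.assoc mult_1_right)
    qed
    finally show ?thesis .
  next
    case False2: False
    then have t1: "t > 1" using False by simp
    have x: "1 < \<xi>" "\<xi> < t" using xi t1 by (auto simp: min_def max_def)
    have q: "\<bar>t - \<xi>\<bar> * \<bar>t - 1\<bar> / \<xi>^2 \<le> (t - 1)^2"
    proof -
      have "\<bar>t - \<xi>\<bar> * \<bar>t - 1\<bar> \<le> (t - 1)^2" using x by (simp add: power2_eq_square mult_right_mono)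
      moreover have "1 * 1 \<le> \<xi> * \<xi>" by (rule mult_mono) (use x in auto)
      then have "1 \<le> \<xi>^2" by (simp add: power2_eq_square)
      then have "\<bar>t - \<xi>\<bar> * \<bar>t - 1\<bar> / \<xi>^2 \<le> \<bar>t - \<xi>\<bar> * \<bar>t - 1\<bar> / 1"
        by (intro divide_left_mono) auto
      ultimately show ?thesis by simp
    qed
    have sq: "(sqrt t - 1)^(2*m) \<le> t^m"
    proof -
      have "0 \<le> sqrt t - 1" "sqrt t - 1 \<le> sqrt t" using t1 by auto
      then have "(sqrt t - 1)^(2*m) \<le> (sqrt t)^(2*m)" by (intro power_mono) auto
      also have "\<dots> = t^m" using t by (simp add: power_mult)
      finally show ?thesis .
    qed
    have E1: "\<bar>Sb m t * ln t - Rb m t\<bar> \<le> t^m * (t - 1)^2"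
    proof -
      have nn: "0 \<le> (sqrt t - 1)^(2*m)" by (simp add: power_mult)
      have "(sqrt t - 1)^(2*m) * (\<bar>t - \<xi>\<bar> * \<bar>t - 1\<bar> / \<xi>^2) \<le> t^m * (t - 1)^2"
        using q sq nn t by (intro mult_mono) auto
      then show ?thesis using xi(3) by linarith
    qed
    have St: "Sb m t \<ge> (real m + 1) * t^m" using Sb_ge_top[of t m] t by simp
    have tm: "t^m > 0" using t by simp
    have "\<bar>Sb m t * ln t - Rb m t\<bar> / Sb m t \<le> (t^m * (t - 1)^2) / ((real m + 1) * t^m)"
      using E1 St tm by (intro frac_le) auto
    also have "\<dots> = (t - 1)^2 / (real m + 1)" using tm t by simp
    finally have q3: "\<bar>Sb m t * ln t - Rb m t\<bar> / Sb m t \<le> (t - 1)^2 / (real m + 1)" .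
    have "2 * t^2 * (Rb m t / Sb m t - ln t) \<le> 2 * t^2 * ((t - 1)^2 / (real m + 1))"
      using rl q3 by (intro mult_left_mono) auto
    also have "\<dots> \<le> 2 * M^2 * ((t - 1)^2 / (real m + 1))"
      using t by (intro mult_right_mono mult_left_mono power_mono) auto
    also have "\<dots> = (2 * M^2 / (real m + 1)) * (t - 1)^2" by simp
    also have "\<dots> \<le> \<epsilon> / 4 * (t - 1)^2"
    proof (rule mult_right_mono)
      show "2 * M^2 / (real m + 1) \<le> \<epsilon> / 4" using c2 by (simp add: field_simps)
    qed simp
    finally show ?thesis .
  qed
qed


lemma ev_near1: "d > 0 \<Longrightarrow> eventually (\<lambda>t. t \<noteq> 1 \<and> \<bar>t - 1\<bar> < d) (at (1::real))"
  unfolding eventually_at by (rule exI[of _ d]) (auto simp: dist_real_def)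

lemma ev_cont: fixes Q :: "real poly" assumes "e > 0"
  shows "eventually (\<lambda>t. \<bar>poly Q t - poly Q 1\<bar> < e) (at (1::real))"
proof -
  have "(poly Q \<longlongrightarrow> poly Q 1) (at 1)"
    by (intro tendsto_intros) 
  from tendstoD[OF this assms] show ?thesis by (simp add: dist_real_def)
qed

lemma pow_le_base: "0 \<le> (x::real) \<Longrightarrow> x \<le> 1 \<Longrightarrow> j \<ge> 1 \<Longrightarrow> x^j \<le> x"
  by (metis One_nat_def power_decreasing power_one_right)

lemma poly_bigo_zero:
  fixes P :: "real poly"
  assumes deg: "degree P \<le> N" and O: "(\<lambda>t. poly P t) \<in> O[at 1](\<lambda>t. (t - 1)^(Suc N))"
  shows "P = 0"
proof (rule ccontr)
  assume P0: "P \<noteq> 0"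
  define k where "k = order 1 P"
  obtain Q where Q: "P = [:- 1, 1:] ^ k * Q" "\<not> [:- 1, 1:] dvd Q"
    using order_decomp[OF P0, of 1] unfolding k_def by blast
  have kN: "k \<le> N" using order_degree[OF P0, of 1] deg unfolding k_def by simp
  have Q1: "poly Q 1 \<noteq> 0" using Q(2) poly_eq_0_iff_dvd[of Q 1] by simp
  define q where "q = \<bar>poly Q 1\<bar>"
  have qp: "q > 0" using Q1 q_def by simp
  from O obtain c where c: "c > 0" "eventually (\<lambda>t. \<bar>poly P t\<bar> \<le> c * \<bar>(t - 1)^(Suc N)\<bar>) (at 1)"
    by (elim landau_o.bigE) auto
  have ev: "eventually (\<lambda>t. (t \<noteq> 1 \<and> \<bar>t - 1\<bar> < min 1 (q / (2*c))) \<and> \<bar>poly Q t - poly Q 1\<bar> < q/2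
       \<and> \<bar>poly P t\<bar> \<le> c * \<bar>(t - 1)^(Suc N)\<bar>) (at (1::real))"
  proof -
    have "min 1 (q/(2*c)) > 0" using c qp by simp
    moreover have "q/2 > 0" using qp by simp
    ultimately show ?thesis
      using eventually_conj[OF ev_near1[of "min 1 (q/(2*c))"] eventually_conj[OF ev_cont[of "q/2" Q] c(2)]]
      by blast
  qed
  have "eventually (\<lambda>t. False) (at (1::real))"
  proof (rule eventually_mono[OF ev])
    fix t :: real
    assume h: "(t \<noteq> 1 \<and> \<bar>t - 1\<bar> < min 1 (q / (2*c))) \<and> \<bar>poly Q t - poly Q 1\<bar> < q/2
       \<and> \<bar>poly P t\<bar> \<le> c * \<bar>(t - 1)^(Suc N)\<bar>"
    define u where "u = \<bar>t - 1\<bar>"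
    have u: "0 < u" "u < 1" "u < q / (2*c)" using h unfolding u_def by auto
    have Pt: "\<bar>poly P t\<bar> = u^k * \<bar>poly Q t\<bar>"
      unfolding Q(1) u_def by (simp add: abs_mult power_abs)
    have "u^k * \<bar>poly Q t\<bar> \<le> c * (u^k * u^(Suc N - k))"
    proof -
      have e: "k + (Suc N - k) = Suc N" using kN by simp
      have "u^k * u^(Suc N - k) = u^(Suc N)" unfolding power_add[symmetric] e ..
      moreover have "\<bar>(t - 1)^(Suc N)\<bar> = u^(Suc N)" unfolding u_def by (rule power_abs)
      ultimately show ?thesis using h Pt by simp
    qed
    then have "\<bar>poly Q t\<bar> \<le> c * u^(Suc N - k)"
      using u by (simp add: mult.left_commute[of c])
    also have "\<dots> \<le> c * u"
      using u c kN by (intro mult_left_mono pow_le_base) auto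
    also have "\<dots> < q / 2" using u c by (simp add: field_simps)
    finally have "\<bar>poly Q t\<bar> < q / 2" .
    moreover have "\<bar>poly Q t\<bar> > q / 2" using h unfolding q_def by linarith
    ultimately show False by simp
  qed
  then show False by simp
qed


lemma pade_unique:
  fixes R1 S1 R2 S2 :: "real poly"
  assumes d1: "degree R1 \<le> m + 1" "degree S1 \<le> m" and n1: "\<forall>t>0. poly S1 t \<noteq> 0"
    and O1: "(\<lambda>t. ln t - poly R1 t / poly S1 t) \<in> O[at 1](\<lambda>t. (t - 1) ^ (2 * m + 2))"
    and d2: "degree R2 \<le> m + 1" "degree S2 \<le> m" and n2: "\<forall>t>0. poly S2 t \<noteq> 0"
    and O2: "(\<lambda>t. ln t - poly R2 t / poly S2 t) \<in> O[at 1](\<lambda>t. (t - 1) ^ (2 * m + 2))"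
    and t: "t > 0"
  shows "poly R1 t / poly S1 t = poly R2 t / poly S2 t"
proof -
  define P where "P = R1 * S2 - R2 * S1"
  have degP: "degree P \<le> 2 * m + 1"
  proof -
    have "degree (R1 * S2) \<le> 2 * m + 1" using degree_mult_le[of R1 S2] d1 d2 by simp
    moreover have "degree (R2 * S1) \<le> 2 * m + 1" using degree_mult_le[of R2 S1] d1 d2 by simp
    ultimately show ?thesis unfolding P_def by (rule degree_diff_le)
  qed
  from O1 obtain c1 where c1: "c1 > 0" "eventually (\<lambda>t. \<bar>ln t - poly R1 t / poly S1 t\<bar> \<le> c1 * \<bar>(t - 1)^(2*m+2)\<bar>) (at 1)"
    by (elim landau_o.bigE) auto
  from O2 obtain c2 where c2: "c2 > 0" "eventually (\<lambda>t. \<bar>ln t - poly R2 t / poly S2 t\<bar> \<le> c2 * \<bar>(t - 1)^(2*m+2)\<bar>) (at 1)"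
    by (elim landau_o.bigE) auto
  define B where "B = \<bar>poly (S1 * S2) 1\<bar> + 1"
  have ev: "eventually (\<lambda>t. (t \<noteq> 1 \<and> \<bar>t - 1\<bar> < 1/2) \<and> \<bar>poly (S1*S2) t - poly (S1*S2) 1\<bar> < 1 \<and>
      \<bar>ln t - poly R1 t / poly S1 t\<bar> \<le> c1 * \<bar>(t - 1)^(2*m+2)\<bar> \<and>
      \<bar>ln t - poly R2 t / poly S2 t\<bar> \<le> c2 * \<bar>(t - 1)^(2*m+2)\<bar>) (at (1::real))"
    using eventually_conj[OF ev_near1[of "1/2"] eventually_conj[OF ev_cont[of 1 "S1*S2"] eventually_conj[OF c1(2) c2(2)]]]
    by simp
  have "(\<lambda>t. poly P t) \<in> O[at 1](\<lambda>t. (t - 1)^(Suc (2*m+1)))"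
  proof (rule bigoI[where c = "B * (c1 + c2)"])
    show "eventually (\<lambda>t. norm (poly P t) \<le> B * (c1 + c2) * norm ((t - 1)^(Suc (2*m+1)))) (at 1)"
    proof (rule eventually_mono[OF ev])
      fix t :: real
      assume h: "(t \<noteq> 1 \<and> \<bar>t - 1\<bar> < 1/2) \<and> \<bar>poly (S1*S2) t - poly (S1*S2) 1\<bar> < 1 \<and>
        \<bar>ln t - poly R1 t / poly S1 t\<bar> \<le> c1 * \<bar>(t - 1)^(2*m+2)\<bar> \<and>
        \<bar>ln t - poly R2 t / poly S2 t\<bar> \<le> c2 * \<bar>(t - 1)^(2*m+2)\<bar>"
      have tp: "t > 0" using h by (auto simp: abs_if split: if_splits)
      have s1: "poly S1 t \<noteq> 0" using n1 tp by auto
      have s2: "poly S2 t \<noteq> 0" using n2 tp by auto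
      have Pe: "poly P t = (poly S1 t * poly S2 t) * ((ln t - poly R2 t / poly S2 t) - (ln t - poly R1 t / poly S1 t))"
        unfolding P_def using s1 s2 by (simp add: field_simps)
      have bS: "\<bar>poly S1 t * poly S2 t\<bar> \<le> B" using h unfolding B_def by auto
      have "\<bar>(ln t - poly R2 t / poly S2 t) - (ln t - poly R1 t / poly S1 t)\<bar> \<le> (c1 + c2) * \<bar>(t - 1)^(2*m+2)\<bar>"
        using h by (simp add: algebra_simps) linarith
      then have "\<bar>poly P t\<bar> \<le> B * ((c1 + c2) * \<bar>(t - 1)^(2*m+2)\<bar>)"
        unfolding Pe abs_mult using bS by (intro mult_mono) auto
      then show "norm (poly P t) \<le> B * (c1 + c2) * norm ((t - 1)^(Suc (2*m+1)))"
        by (simp add: mult.assoc)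
    qed
  qed
  then have "P = 0" by (rule poly_bigo_zero[OF degP])
  then have "R1 * S2 = R2 * S1" unfolding P_def by simp
  then have "poly (R1 * S2) t = poly (R2 * S1) t" by simp
  then have "poly R1 t * poly S2 t = poly R2 t * poly S1 t" by simp
  then show ?thesis using n1 n2 t by (simp add: field_simps)
qed


definition Spoly :: "nat \<Rightarrow> real poly" where "Spoly m = (\<Sum>l\<le>m. monom (sc m l) l)"
definition Rpoly :: "nat \<Rightarrow> real poly" where "Rpoly m = (\<Sum>k\<le>Suc m. smult (Fd m k 1 / fact k) ([:-1,1:]^k))"

lemma poly_Spoly: "poly (Spoly m) x = Sb m x"
  by (simp add: Spoly_def Sb_def poly_sum poly_monom)

lemma poly_Rpoly: "poly (Rpoly m) x = Rb m x"
  unfolding Rpoly_def Rb_def poly_sum by (intro sum.cong refl) (simp add: poly_power)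

lemma deg_Spoly: "degree (Spoly m) \<le> m"
  unfolding Spoly_def by (rule degree_sum_le) (auto intro: order_trans[OF degree_monom_le])

lemma deg_Rpoly: "degree (Rpoly m) \<le> m + 1"
  unfolding Rpoly_def
proof (rule degree_sum_le)
  fix k assume "k \<in> {..Suc m}"
  then have k: "k \<le> Suc m" by simp
  have "degree (smult (Fd m k 1 / fact k) ([:-1,1:]^k)) \<le> degree (([:-1,1::real:])^k)"
    by (rule degree_smult_le)
  also have "\<dots> \<le> degree [:-1,1::real:] * k" by (rule degree_power_le)
  also have "\<dots> \<le> m + 1" using k by simp
  finally show "degree (smult (Fd m k 1 / fact k) ([:-1,1:]^k)) \<le> m + 1" .
qed simp

lemma sqrt_near: "t \<ge> 0 \<Longrightarrow> \<bar>sqrt t - 1\<bar> \<le> \<bar>t - 1\<bar>"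
proof -
  assume t: "t \<ge> 0"
  have "(sqrt t - 1) * (sqrt t + 1) = t - 1" using t by (simp add: algebra_simps)
  then have "\<bar>sqrt t - 1\<bar> * (sqrt t + 1) = \<bar>t - 1\<bar>" using t by (metis abs_mult abs_of_nonneg real_sqrt_ge_zero add_nonneg_nonneg zero_le_one)
  moreover have "sqrt t + 1 \<ge> 1" using t by simp
  ultimately show ?thesis by (metis abs_ge_zero mult_le_cancel_left1 mult.commute order_refl mult_right_mono mult_1_right order_trans)
qed

lemma near1_bound:
  assumes t: "\<bar>t - 1\<bar> < 1/2" "t \<noteq> 1"
  shows "\<bar>ln t - Rb m t / Sb m t\<bar> \<le> 4 * \<bar>(t - 1)^(2*m+2)\<bar>"
proof -
  have tp: "t > 0" using t by (auto simp: abs_if split: if_splits)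
  obtain \<xi> where xi: "min 1 t < \<xi>" "\<xi> < max 1 t"
    "\<bar>Sb m t * ln t - Rb m t\<bar> \<le> (sqrt t - 1)^(2*m) * (\<bar>t - \<xi>\<bar> * \<bar>t - 1\<bar> / \<xi>^2)"
    using E_bound[OF tp t(2)] by blast
  have xh: "\<xi> > 1/2" using xi t by (auto simp: min_def abs_if split: if_splits)
  have tx: "\<bar>t - \<xi>\<bar> \<le> \<bar>t - 1\<bar>" using xi by (auto simp: min_def max_def split: if_splits)
  have q: "\<bar>t - \<xi>\<bar> * \<bar>t - 1\<bar> / \<xi>^2 \<le> 4 * (t - 1)^2"
  proof -
    have "\<xi>^2 \<ge> 1/4"
    proof -
      have "(1/2) * (1/2) \<le> \<xi> * \<xi>" using xh by (intro mult_mono) auto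
      then show ?thesis by (simp add: power2_eq_square)
    qed
    then have "\<bar>t - \<xi>\<bar> * \<bar>t - 1\<bar> / \<xi>^2 \<le> \<bar>t - \<xi>\<bar> * \<bar>t - 1\<bar> / (1/4)"
      by (intro divide_left_mono) auto
    also have "\<dots> = 4 * (\<bar>t - \<xi>\<bar> * \<bar>t - 1\<bar>)" by simp
    also have "\<dots> \<le> 4 * (\<bar>t - 1\<bar> * \<bar>t - 1\<bar>)" using tx by (intro mult_left_mono mult_right_mono) auto
    finally show ?thesis by (simp add: power2_eq_square abs_mult_self_eq)
  qed
  have s: "(sqrt t - 1)^(2*m) \<le> (t - 1)^(2*m)"
  proof -
    have "(sqrt t - 1)^(2*m) = \<bar>sqrt t - 1\<bar>^(2*m)" by (simp add: power_mult power_even_abs)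
    also have "\<dots> \<le> \<bar>t - 1\<bar>^(2*m)" using sqrt_near[of t] tp by (intro power_mono) auto
    also have "\<dots> = (t - 1)^(2*m)" by (simp add: power_mult power_even_abs)
    finally show ?thesis .
  qed
  have nn: "0 \<le> (sqrt t - 1)^(2*m)" by (simp add: power_mult)
  have E: "\<bar>Sb m t * ln t - Rb m t\<bar> \<le> (t - 1)^(2*m) * (4 * (t - 1)^2)"
  proof -
    have "(sqrt t - 1)^(2*m) * (\<bar>t - \<xi>\<bar> * \<bar>t - 1\<bar> / \<xi>^2) \<le> (t - 1)^(2*m) * (4 * (t - 1)^2)"
      by (rule mult_mono[OF s q]) (auto simp: power_mult)
    then show ?thesis using xi(3) by linarith
  qed
  have S1: "Sb m t \<ge> 1" using Sb_ge1[of t m] tp by simp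
  have "\<bar>ln t - Rb m t / Sb m t\<bar> = \<bar>Sb m t * ln t - Rb m t\<bar> / Sb m t"
    using S1 by (simp add: field_simps abs_divide)
  also have "\<dots> \<le> \<bar>Sb m t * ln t - Rb m t\<bar>" using S1 by (simp add: divide_le_eq mult_le_cancel_left1)
  also have "\<dots> \<le> (t - 1)^(2*m) * (4 * (t - 1)^2)" by (rule E)
  also have "\<dots> = 4 * \<bar>(t - 1)^(2*m+2)\<bar>" by (simp add: power_add power_mult power_even_abs abs_mult power2_eq_square)
  finally show ?thesis .
qed


lemma pade_log_eq: "pade_log m = (\<lambda>t. if t > 0 then Rb m t / Sb m t else 0)"
proof -
  define c where "c = 1 / Sb m 1"
  have S11: "Sb m 1 \<ge> 1" using Sb_ge1[of 1 m] by simp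
  have c0: "c \<noteq> 0" using S11 unfolding c_def by simp
  define R where "R = smult c (Rpoly m)"
  define S where "S = smult c (Spoly m)"
  have pR: "poly R t = c * Rb m t" for t unfolding R_def by (simp add: poly_Rpoly)
  have pS: "poly S t = c * Sb m t" for t unfolding S_def by (simp add: poly_Spoly)
  have Spos: "t > 0 \<Longrightarrow> Sb m t > 0" for t using Sb_ge1[of t m] by simp
  have RS: "t > 0 \<Longrightarrow> poly R t / poly S t = Rb m t / Sb m t" for t
    unfolding pR pS using c0 by simp
  have degR: "degree R \<le> m + 1" unfolding R_def using degree_smult_le[of c "Rpoly m"] deg_Rpoly[of m] by simp
  have degS: "degree S \<le> m" unfolding S_def using degree_smult_le[of c "Spoly m"] deg_Spoly[of m] by simp
  have S1: "poly S 1 = 1" unfolding pS c_def using S11 by simp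
  have Snz: "\<forall>t>0. poly S t \<noteq> 0" unfolding pS using c0 Spos by (metis less_irrefl mult_eq_0_iff)
  have en: "eventually (\<lambda>t. t \<noteq> 1 \<and> \<bar>t - 1\<bar> < 1/2) (at (1::real))" by (rule ev_near1) simp
  have O: "(\<lambda>t. ln t - poly R t / poly S t) \<in> O[at 1](\<lambda>t. (t - 1) ^ (2 * m + 2))"
  proof (rule bigoI[where c = 4])
    show "eventually (\<lambda>t. norm (ln t - poly R t / poly S t) \<le> 4 * norm ((t - 1) ^ (2 * m + 2))) (at 1)"
    proof (rule eventually_mono[OF en])
      fix t :: real assume h: "t \<noteq> 1 \<and> \<bar>t - 1\<bar> < 1/2"
      then have tp: "t > 0" by (auto simp: abs_if split: if_splits)
      show "norm (ln t - poly R t / poly S t) \<le> 4 * norm ((t - 1) ^ (2 * m + 2))"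
        using near1_bound[of t m] h RS[OF tp] by simp
    qed
  qed
  define f0 where "f0 = (\<lambda>t::real. if t > 0 then Rb m t / Sb m t else 0)"
  have f0R: "f0 = (\<lambda>t. if t > 0 then poly R t / poly S t else 0)"
    unfolding f0_def using RS by auto
  show ?thesis unfolding pade_log_def f0_def[symmetric]
  proof (rule the_equality)
    show "\<exists>R S :: real poly. degree R \<le> m + 1 \<and> degree S \<le> m \<and> poly S 1 = 1 \<and>
      (\<forall>t>0. poly S t \<noteq> 0) \<and>
      (\<lambda>t. ln t - poly R t / poly S t) \<in> O[at 1](\<lambda>t. (t - 1) ^ (2 * m + 2)) \<and>
      f0 = (\<lambda>t. if t > 0 then poly R t / poly S t else 0)"
      using degR degS S1 Snz O f0R by blast
  next
    fix f
    assume "\<exists>R S :: real poly. degree R \<le> m + 1 \<and> degree S \<le> m \<and> poly S 1 = 1 \<and>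
      (\<forall>t>0. poly S t \<noteq> 0) \<and>
      (\<lambda>t. ln t - poly R t / poly S t) \<in> O[at 1](\<lambda>t. (t - 1) ^ (2 * m + 2)) \<and>
      f = (\<lambda>t. if t > 0 then poly R t / poly S t else 0)"
    then obtain R2 S2 :: "real poly" where h: "degree R2 \<le> m + 1" "degree S2 \<le> m"
      "\<forall>t>0. poly S2 t \<noteq> 0" "(\<lambda>t. ln t - poly R2 t / poly S2 t) \<in> O[at 1](\<lambda>t. (t - 1) ^ (2 * m + 2))"
      "f = (\<lambda>t. if t > 0 then poly R2 t / poly S2 t else 0)" by blast
    show "f = f0"
    proof
      fix t :: real
      show "f t = f0 t"
      proof (cases "t > 0")
        case True
        have "poly R2 t / poly S2 t = poly R t / poly S t"
          by (rule pade_unique[OF h(1,2,3,4) degR degS Snz O True])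
        then show ?thesis unfolding h(5) f0R using True by simp
      qed (simp add: h(5) f0R)
    qed
  qed
qed


definition hN :: "nat \<Rightarrow> real \<Rightarrow> real" where
  "hN N v = - ln (1 - v) - (\<Sum>k<N. v^(Suc k) / real (Suc k))"
definition h1 :: "nat \<Rightarrow> real \<Rightarrow> real" where "h1 N v = v^N / (1 - v)"
definition h2 :: "nat \<Rightarrow> real \<Rightarrow> real" where
  "h2 N v = (real N * v^(N - Suc 0) * (1 - v) + v^N) / (1 - v)^2"

lemma term_deriv: "((\<lambda>v. v^(Suc k) / real (Suc k)) has_real_derivative (v::real)^k) (at v)"
proof -
  have "((\<lambda>v. v^(Suc k)) has_real_derivative real (Suc k) * v^k) (at v)"
    using DERIV_pow[of "Suc k" v] by simp
  from DERIV_cdivide[OF this, of "real (Suc k)"] show ?thesis by simp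
qed

lemma hN_deriv: assumes v: "v < 1" shows "(hN N has_real_derivative h1 N v) (at v)"
proof -
  have ds: "((\<lambda>v. \<Sum>k<N. v^(Suc k) / real (Suc k)) has_real_derivative (\<Sum>k<N. v^k)) (at v)"
    by (rule DERIV_sum) (rule term_deriv)
  have dl: "((\<lambda>v. - ln (1 - v)) has_real_derivative 1 / (1 - v)) (at v)"
    using v by (auto intro!: derivative_eq_intros)
  have d: "((\<lambda>v. - ln (1 - v) - (\<Sum>k<N. v^(Suc k) / real (Suc k))) has_real_derivative
        1 / (1 - v) - (\<Sum>k<N. v^k)) (at v)"
    by (rule DERIV_diff[OF dl ds])
  have g: "(\<Sum>k<N. v^k) = (1 - v^N) / (1 - v)"
    using v sum_gp_strict[of v N] by simp
  have "1 / (1 - v) - (\<Sum>k<N. v^k) = h1 N v"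
    unfolding g h1_def using v by (simp add: field_simps)
  then show ?thesis using d unfolding hN_def[abs_def] by simp
qed

lemma h1_deriv: assumes v: "v < 1" shows "(h1 N has_real_derivative h2 N v) (at v)"
proof -
  have "((\<lambda>v. v^N / (1 - v)) has_real_derivative
      (real N * v^(N - Suc 0) * (1 - v) - v^N * (- 1)) / ((1 - v) * (1 - v))) (at v)"
    using v by (auto intro!: derivative_eq_intros simp: algebra_simps)
  then show ?thesis unfolding h1_def[abs_def] h2_def by (simp add: power2_eq_square)
qed

lemma h2_nonneg: "0 \<le> v \<Longrightarrow> v < 1 \<Longrightarrow> h2 N v \<ge> 0"
  unfolding h2_def by (intro divide_nonneg_nonneg add_nonneg_nonneg mult_nonneg_nonneg) auto

lemma h2_le: "0 \<le> v \<Longrightarrow> v < 1 \<Longrightarrow> N \<ge> 1 \<Longrightarrow> h2 N v \<le> real (N + 1) * v^(N - 1) / (1 - v)^2"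
proof -
  assume v: "0 \<le> v" "v < 1" and N: "N \<ge> 1"
  have "v^N \<le> v^(N - 1)" using v N by (intro power_decreasing) auto
  moreover have "real N * v^(N - 1) * (1 - v) \<le> real N * v^(N - 1)"
    using v by (intro mult_right_le_one_le) auto
  ultimately have "real N * v^(N - Suc 0) * (1 - v) + v^N \<le> real (N + 1) * v^(N - 1)"
    by (simp add: algebra_simps)
  then show ?thesis unfolding h2_def using v by (intro divide_right_mono) auto
qed

lemma hN_0: "hN N 0 = 0" by (simp add: hN_def)

lemma hN_taylor:
  assumes v: "0 \<le> v" "v < 1" and c: "0 \<le> c" "c < 1" and vc: "v \<noteq> c"
  shows "\<exists>\<eta>. (if v < c then v < \<eta> \<and> \<eta> < c else c < \<eta> \<and> \<eta> < v) \<and>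
     hN N v = hN N c + h1 N c * (v - c) + h2 N \<eta> / 2 * (v - c)^2"
proof -
  define diff where "diff = (\<lambda>m::nat. if m = 0 then hN N else if m = 1 then h1 N else h2 N)"
  have D: "\<forall>m t. m < 2 \<and> 0 \<le> t \<and> t \<le> max v c \<longrightarrow> DERIV (diff m) t :> diff (Suc m) t"
  proof (intro allI impI)
    fix m :: nat and t :: real assume h: "m < 2 \<and> 0 \<le> t \<and> t \<le> max v c"
    then have t1: "t < 1" using v c by auto
    show "DERIV (diff m) t :> diff (Suc m) t"
    proof (cases "m = 0")
      case True then show ?thesis unfolding diff_def using hN_deriv[OF t1] by simp
    next
      case False then have "m = 1" using h by simp
      then show ?thesis unfolding diff_def using h1_deriv[OF t1] by simp
    qed
  qed
  obtain \<eta> where e: "(if v < c then v < \<eta> \<and> \<eta> < c else c < \<eta> \<and> \<eta> < v)"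
    "hN N v = (\<Sum>m<2. diff m c / fact m * (v - c)^m) + diff 2 \<eta> / fact 2 * (v - c)^2"
    using Taylor[of 2 diff "hN N" 0 "max v c" c v] D v c vc unfolding diff_def by auto
  have "hN N v = hN N c + h1 N c * (v - c) + h2 N \<eta> / 2 * (v - c)^2"
    using e(2) unfolding diff_def by (simp add: numeral_2_eq_2)
  then show ?thesis using e(1) by blast
qed


definition Tp :: "real \<Rightarrow> nat \<Rightarrow> real poly" where
  "Tp M N = [:ln M - hN N (1 - 1/M) + h1 N (1 - 1/M) * (1 - 1/M):]
     - (\<Sum>k<N. smult (1 / real (Suc k)) ([:1, -1/M:]^(Suc k))) - smult (h1 N (1 - 1/M)) [:1, -1/M:]"

lemma poly_Tp:
  assumes M: "M > 0" and t: "t > 0"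
  shows "poly (Tp M N) t - ln t = hN N (1 - t/M) - hN N (1 - 1/M) - h1 N (1 - 1/M) * ((1 - t/M) - (1 - 1/M))"
proof -
  have pv: "poly [:1, -1/M:] t = 1 - t/M" by simp
  have l: "ln (1 - (1 - t/M)) = ln t - ln M" using M t by (simp add: ln_div)
  have ps: "poly (\<Sum>k<N. smult (1 / real (Suc k)) ([:1, -1/M:]^(Suc k))) t = (\<Sum>k<N. (1 - t/M)^(Suc k) / real (Suc k))"
    unfolding poly_sum by (intro sum.cong refl) (simp only: poly_smult poly_power pv, simp)
  show ?thesis unfolding Tp_def hN_def l poly_diff ps
    by (simp add: pv algebra_simps)
qed

lemma hN_le:
  assumes v: "0 \<le> v" "v < 1"
  shows "hN N v \<le> v^(Suc N) / (1 - v)"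
proof (cases "v = 0")
  case True then show ?thesis by (simp add: hN_0)
next
  case False
  then have vp: "v > 0" using v by simp
  obtain z where z: "0 < z" "z < v" "hN N v - hN N 0 = (v - 0) * h1 N z"
    using MVT2[of 0 v "hN N" "h1 N"] vp v hN_deriv by force
  have "h1 N z \<le> v^N / (1 - v)"
    unfolding h1_def using z v by (intro frac_le power_mono) auto
  then have "v * h1 N z \<le> v * (v^N / (1 - v))" using vp by (intro mult_left_mono) auto
  then show ?thesis using z(3) by (simp add: hN_0)
qed

lemma hN_nonneg:
  assumes v: "0 \<le> v" "v < 1"
  shows "hN N v \<ge> 0"
proof (cases "v = 0")
  case True then show ?thesis by (simp add: hN_0)
next
  case False
  then have vp: "v > 0" using v by simp
  obtain z where z: "0 < z" "z < v" "hN N v - hN N 0 = (v - 0) * h1 N z"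
    using MVT2[of 0 v "hN N" "h1 N"] vp v hN_deriv by force
  have "h1 N z \<ge> 0" unfolding h1_def using z v by simp
  then show ?thesis using z(3) vp by (simp add: hN_0)
qed

lemma T_bound:
  fixes M \<epsilon> t :: real and j :: nat
  assumes M: "1 \<le> M" and e: "0 < \<epsilon>" and j1: "1 \<le> j" and jb: "256 * M^4 \<le> \<epsilon> * real j"
    and t: "0 < t" "t \<le> M"
  shows "ln t \<le> poly (Tp M (2*j+1)) t \<and> 2 * t^2 * (poly (Tp M (2*j+1)) t - ln t) \<le> \<epsilon> / 4 * (t - 1)^2"
proof -
  define N where "N = 2*j+1"
  define v where "v = 1 - t/M"
  define c where "c = 1 - 1/M"
  have Mp: "M > 0" using M by simp
  have v: "0 \<le> v" "v < 1" unfolding v_def using t Mp by (auto simp: field_simps)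
  have c: "0 \<le> c" "c < 1" unfolding c_def using M by (auto simp: field_simps)
  define K where "K = poly (Tp M N) t - ln t"
  have K: "K = hN N v - hN N c - h1 N c * (v - c)"
    unfolding K_def v_def c_def using poly_Tp[OF Mp t(1)] by simp
  have vc2: "(v - c)^2 = (t - 1)^2 / M^2"
    unfolding v_def c_def using Mp by (simp add: field_simps power2_eq_square)
  show ?thesis
  proof (cases "t = 1")
    case True
    then have "v = c" unfolding v_def c_def by simp
    then show ?thesis using K True unfolding K_def N_def by simp
  next
    case False
    then have vc: "v \<noteq> c" unfolding v_def c_def using Mp by (simp add: field_simps)
    obtain \<eta> where eta: "(if v < c then v < \<eta> \<and> \<eta> < c else c < \<eta> \<and> \<eta> < v)"
      "hN N v = hN N c + h1 N c * (v - c) + h2 N \<eta> / 2 * (v - c)^2"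
      using hN_taylor[OF v c vc, of N] by blast
    have eta01: "0 \<le> \<eta>" "\<eta> < 1" using eta(1) v c by (auto split: if_splits)
    have KT: "K = h2 N \<eta> / 2 * (v - c)^2" using K eta(2) by simp
    have K0: "K \<ge> 0" unfolding KT using h2_nonneg[OF eta01] by simp
    have upper: "2 * t^2 * K \<le> \<epsilon> / 4 * (t - 1)^2"
    proof (cases "t < 1/2")
      case False
      then have th: "t \<ge> 1/2" by simp
      define q where "q = 1 - 1/(2*M)"
      have etaq: "\<eta> \<le> q"
      proof -
        have "v \<le> q" unfolding v_def q_def using th Mp by (simp add: field_simps)
        moreover have "c \<le> q" unfolding c_def q_def using Mp by (simp add: field_simps)
        ultimately show ?thesis using eta(1) by (auto split: if_splits)
      qed
      have N1: "N \<ge> 1" unfolding N_def by simp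
      have h2b: "h2 N \<eta> \<le> real (N + 1) * \<eta>^(N - 1) / (1 - \<eta>)^2" by (rule h2_le[OF eta01 N1])
      have om: "1 - \<eta> \<ge> 1/(2*M)" using etaq unfolding q_def by simp
      have om2: "1 / (1 - \<eta>)^2 \<le> 4 * M^2"
      proof -
        have "(1/(2*M))^2 \<le> (1 - \<eta>)^2" using om Mp by (intro power_mono) auto
        then have "1 / (1 - \<eta>)^2 \<le> 1 / (1/(2*M))^2" using Mp eta01
          by (intro divide_left_mono) auto
        also have "\<dots> = 4 * M^2" by (simp add: power2_eq_square field_simps)
        finally show ?thesis .
      qed
      have qj: "q^j \<le> 2 * M / real j"
      proof -
        define a where "a = 1/(2*M)"
        have a: "0 \<le> a" "a \<le> 1" unfolding a_def using M by auto
        have "(1 - a)^j * (1 + real j * a) \<le> 1" by (rule bern[OF a])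
        moreover have "(1 - a)^j \<ge> 0" using a by simp
        moreover have "real j * a > 0" unfolding a_def using j1 Mp by simp
        ultimately have "(1 - a)^j * (real j * a) \<le> 1" by (smt (verit) mult_left_mono)
        then have "(1 - a)^j \<le> 1 / (real j * a)" using \<open>real j * a > 0\<close> by (simp add: field_simps)
        then show ?thesis unfolding q_def a_def using Mp by (simp add: field_simps)
      qed
      have etapow: "\<eta>^(N - 1) \<le> (2 * M / real j)^2"
      proof -
        have "\<eta>^(N - 1) \<le> q^(N - 1)" using eta01 etaq by (intro power_mono) auto
        also have "\<dots> = (q^j)^2" unfolding N_def by (simp add: power_mult[symmetric] mult.commute)
        also have "\<dots> \<le> (2 * M / real j)^2"
        proof (rule power_mono[OF qj])
          have "1/(2*M) \<le> 1" using M by simp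
          then show "0 \<le> q^j" unfolding q_def by simp
        qed
        finally show ?thesis .
      qed
      have h2b2: "h2 N \<eta> \<le> 64 * M^4 / real j"
      proof -
        have "h2 N \<eta> \<le> real (N + 1) * \<eta>^(N - 1) * (1 / (1 - \<eta>)^2)" using h2b by simp
        also have "\<dots> \<le> real (N + 1) * (2 * M / real j)^2 * (4 * M^2)"
          using etapow om2 eta01 by (intro mult_mono mult_left_mono) auto
        also have "\<dots> = (real (2*j+2) / real j) * (16 * M^4 / real j)"
          unfolding N_def using j1 by (simp add: field_simps power2_eq_square power4_eq_xxxx)
        also have "\<dots> \<le> 4 * (16 * M^4 / real j)"
          using j1 by (intro mult_right_mono) (auto simp: field_simps)
        finally show ?thesis by simp
      qed
      have "2 * t^2 * K = t^2 * h2 N \<eta> * ((t - 1)^2 / M^2)" unfolding KT vc2 by simp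
      also have "\<dots> \<le> M^2 * (64 * M^4 / real j) * ((t - 1)^2 / M^2)"
        using t h2b2 h2_nonneg[OF eta01] by (intro mult_mono mult_right_mono power_mono) auto
      also have "\<dots> = (64 * M^4 / real j) * (t - 1)^2" using Mp by simp
      also have "\<dots> \<le> \<epsilon> / 4 * (t - 1)^2"
        using jb j1 by (intro mult_right_mono) (auto simp: field_simps)
      finally show ?thesis .
    next
      case True
      have vgc: "v > c" unfolding v_def c_def using True Mp by (simp add: field_simps)
      have hc: "hN N c \<ge> 0" by (rule hN_nonneg[OF c])
      have h1c: "h1 N c \<ge> 0" unfolding h1_def using c by simp
      have "h1 N c * (v - c) \<ge> 0" using h1c vgc by simp
      then have "K \<le> hN N v" unfolding K using hc by linarith
      also have "\<dots> \<le> v^(Suc N) / (1 - v)" by (rule hN_le[OF v])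
      also have "\<dots> = M * v^(Suc N) / t" unfolding v_def using Mp t by (simp add: field_simps)
      finally have Kb: "K \<le> M * v^(Suc N) / t" .
      have bb: "(t/M) * (1 - t/M)^(Suc N) \<le> 1 / real (Suc N)"
        by (rule bern2) (use t Mp in \<open>auto simp: field_simps\<close>)
      have "2 * t^2 * K \<le> 2 * t^2 * (M * v^(Suc N) / t)" using Kb by (intro mult_left_mono) auto
      also have "\<dots> = 2 * M^2 * ((t/M) * v^(Suc N))" using t Mp by (simp add: field_simps power2_eq_square)
      also have "\<dots> \<le> 2 * M^2 * (1 / real (Suc N))" using bb unfolding v_def by (intro mult_left_mono) auto
      also have "\<dots> \<le> \<epsilon> / 16"
      proof -
        have "M^2 \<le> M^4" using M by (intro power_increasing) auto
        moreover have "M^4 \<ge> 0" by simp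
        ultimately have "32 * M^2 \<le> \<epsilon> * real j" using jb by linarith
        moreover have "real j \<le> real (Suc N)" unfolding N_def by simp
        ultimately have "32 * M^2 \<le> \<epsilon> * real (Suc N)" using e by (smt (verit) mult_left_mono)
        then show ?thesis by (simp add: field_simps)
      qed
      also have "\<dots> \<le> \<epsilon> / 4 * (t - 1)^2"
      proof -
        have "(1/2)^2 \<le> (1 - t)^2" using True t by (intro power_mono) auto
        then have "(1/2)^2 \<le> (t - 1)^2" by (simp add: power2_commute)
        then have "\<epsilon> / 4 * (1/2)^2 \<le> \<epsilon> / 4 * (t - 1)^2" using e by (intro mult_left_mono) auto
        then show ?thesis by (simp add: power2_eq_square)
      qed
      finally show ?thesis .
    qed
    show ?thesis using K0 upper unfolding K_def N_def by simp
  qed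
qed


lemma ln_ineq: "(t::real) > 0 \<Longrightarrow> t * ln t \<ge> t - 1"
proof -
  assume t: "t > 0"
  have "ln (1/t) \<le> 1/t - 1" using t by (intro ln_le_minus_one) auto
  then have "- ln t \<le> 1/t - 1" using t by (simp add: ln_div)
  then have "t * (- ln t) \<le> t * (1/t - 1)" using t by (intro mult_left_mono) auto
  moreover have "t * (1/t - 1) = 1 - t" using t by (simp add: field_simps)
  moreover have "t * (- ln t) = - (t * ln t)" by simp
  ultimately show ?thesis by linarith
qed

lemma f_ge: "(t::real) > 0 \<Longrightarrow> (t - 1)^2 \<le> 2 * t^2 * ln t - t^2 + 1"
proof -
  assume t: "t > 0"
  have "t * (t * ln t) \<ge> t * (t - 1)" using ln_ineq[OF t] t by (intro mult_left_mono) auto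
  then show ?thesis by (simp add: power2_eq_square algebra_simps)
qed

lemma point_lower:
  fixes M \<epsilon> t :: real and m j :: nat
  assumes M: "1 \<le> M" and e: "0 < \<epsilon>"
    and m1: "1 \<le> m" and c1: "8 \<le> \<epsilon> * (2 * real m - 1)" and c2: "8 * M^2 \<le> \<epsilon> * (real m + 1)"
    and j1: "1 \<le> j" and jb: "256 * M^4 \<le> \<epsilon> * real j"
    and t: "0 \<le> t" "t \<le> M"
  shows "2 * t^2 * pade_log m t \<le> 2 * t^2 * poly (Tp M (2*j+1)) t + \<epsilon>/2 * (t - 1)^2"
proof (cases "t = 0")
  case True then show ?thesis using e by simp
next
  case False
  then have tp: "t > 0" using t by simp
  have pl: "pade_log m t = Rb m t / Sb m t" using tp by (simp add: pade_log_eq)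
  have r: "2 * t^2 * (Rb m t / Sb m t - ln t) \<le> \<epsilon> / 4 * (t - 1)^2"
    by (rule r_bound[OF tp t(2) M e m1 c1 c2])
  have T: "ln t \<le> poly (Tp M (2*j+1)) t" using T_bound[OF M e j1 jb tp t(2)] by simp
  have a: "2 * t^2 * ln t \<le> 2 * t^2 * poly (Tp M (2*j+1)) t" using T by (intro mult_left_mono) auto
  have b: "0 \<le> \<epsilon> / 4 * (t - 1)^2" using e by simp
  have r': "2 * t^2 * (Rb m t / Sb m t) - 2 * t^2 * ln t \<le> \<epsilon> / 4 * (t - 1)^2"
    using r by (simp only: right_diff_distrib)
  have q: "\<epsilon>/2 * (t - 1)^2 = 2 * (\<epsilon> / 4 * (t - 1)^2)" by simp
  show ?thesis unfolding pl using a b r' q by linarith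
qed

lemma point_upper:
  fixes M \<epsilon> t :: real and j :: nat
  assumes M: "1 \<le> M" and e: "0 < \<epsilon>"
    and j1: "1 \<le> j" and jb: "256 * M^4 \<le> \<epsilon> * real j"
    and t: "0 \<le> t" "t \<le> M"
  shows "2 * t^2 * poly (Tp M (2*j+1)) t + \<epsilon>/2 * (t - 1)^2 \<le> (1 + \<epsilon>) * (t^2 * ln (t^2)) + \<epsilon> * (1 - t^2)"
proof (cases "t = 0")
  case True then show ?thesis using e by simp
next
  case False
  then have tp: "t > 0" using t by simp
  have T: "2 * t^2 * (poly (Tp M (2*j+1)) t - ln t) \<le> \<epsilon> / 4 * (t - 1)^2"
    using T_bound[OF M e j1 jb tp t(2)] by simp
  have l2: "ln (t^2) = 2 * ln t" using tp by (simp add: ln_realpow)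
  have f: "\<epsilon> * (t - 1)^2 \<le> \<epsilon> * (2 * t^2 * ln t - t^2 + 1)" using f_ge[OF tp] e by (intro mult_left_mono) auto
  have b: "0 \<le> \<epsilon> / 4 * (t - 1)^2" using e by simp
  have T': "2 * t^2 * poly (Tp M (2*j+1)) t - 2 * t^2 * ln t \<le> \<epsilon> / 4 * (t - 1)^2"
    using T by (simp only: right_diff_distrib)
  have q1: "\<epsilon>/2 * (t - 1)^2 = 2 * (\<epsilon> / 4 * (t - 1)^2)" by simp
  have q2: "\<epsilon> * (t - 1)^2 = 4 * (\<epsilon> / 4 * (t - 1)^2)" by simp
  have q3: "(1 + \<epsilon>) * (t^2 * (2 * ln t)) + \<epsilon> * (1 - t^2) = 2 * t^2 * ln t + \<epsilon> * (2 * t^2 * ln t - t^2 + 1)"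
    by (simp add: algebra_simps)
  show ?thesis unfolding l2 q3 using T' f b q1 q2 by linarith
qed


theorem mainTheorem4:
  fixes n :: nat and \<pi> :: "nat \<Rightarrow> real" and \<epsilon> :: real
  assumes pos: "\<forall>i<n. \<pi> i > 0"
    and sum1: "(\<Sum>i<n. \<pi> i) = 1"
    and eps: "0 < \<epsilon>" "\<epsilon> < 1"
  shows "\<exists>(m::nat) (p::real poly).
           (\<forall>t. 0 \<le> t \<and> t \<le> 1 / sqrt (Min (\<pi> ` {..<n})) \<longrightarrow>
                 poly p t \<ge> 2 * t\<^sup>2 * pade_log m t) \<and>
           (\<forall>x\<in>pi_sphere n \<pi>.
                 (\<Sum>i<n. \<pi> i * poly p (x i)) \<le> (1 + \<epsilon>) * ent_sq n \<pi> x)"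
proof -
  have n0: "n \<noteq> 0" using sum1 by (cases n) auto
  define A where "A = \<pi> ` {..<n}"
  have finA: "finite A" "A \<noteq> {}" unfolding A_def using n0 by auto
  define pm where "pm = Min A"
  have pmA: "pm \<in> A" unfolding pm_def using finA by (rule Min_in)
  then obtain i0 where i0: "i0 < n" "pm = \<pi> i0" unfolding A_def by auto
  have pmp: "pm > 0" using pos i0 by simp
  have pmle: "\<And>i. i < n \<Longrightarrow> pm \<le> \<pi> i" unfolding pm_def A_def by (intro Min_le) auto
  have pile1: "\<And>i. i < n \<Longrightarrow> \<pi> i \<le> 1"
  proof -
    fix i assume i: "i < n"
    have "\<pi> i \<le> (\<Sum>i<n. \<pi> i)" by (rule member_le_sum) (use i pos in auto)
    then show "\<pi> i \<le> 1" using sum1 by simp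
  qed
  have pm1: "pm \<le> 1" using pile1[OF i0(1)] i0 by simp
  define M where "M = 1 / sqrt pm"
  have sq: "0 < sqrt pm" "sqrt pm \<le> 1" using pmp pm1 by auto
  have M1: "1 \<le> M" unfolding M_def using sq by (simp add: field_simps)
  have M2: "M^2 = 1 / pm" unfolding M_def using pmp by (simp add: power_divide)
  define m where "m = nat \<lceil>8 * M^2 / \<epsilon>\<rceil> + 1"
  define j where "j = nat \<lceil>256 * M^4 / \<epsilon>\<rceil> + 1"
  have m1: "1 \<le> m" unfolding m_def by simp
  have j1: "1 \<le> j" unfolding j_def by simp
  have mge: "8 * M^2 / \<epsilon> \<le> real m" unfolding m_def using real_nat_ceiling_ge[of "8 * M^2 / \<epsilon>"] by simp
  have jge: "256 * M^4 / \<epsilon> \<le> real j" unfolding j_def using real_nat_ceiling_ge[of "256 * M^4 / \<epsilon>"] by simp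
  have em: "8 * M^2 \<le> \<epsilon> * real m" using mge eps by (simp add: field_simps)
  have c2: "8 * M^2 \<le> \<epsilon> * (real m + 1)" using em eps by (simp add: algebra_simps)
  have c1: "8 \<le> \<epsilon> * (2 * real m - 1)"
  proof -
    have "M^2 \<ge> 1" using M1 by simp
    then have "8 \<le> \<epsilon> * real m" using em by linarith
    moreover have "\<epsilon> * real m \<le> \<epsilon> * (2 * real m - 1)" using m1 eps by (intro mult_left_mono) auto
    ultimately show ?thesis by linarith
  qed
  have jb: "256 * M^4 \<le> \<epsilon> * real j" using jge eps by (simp add: field_simps)
  define T where "T = Tp M (2*j+1)"
  define p where "p = smult 2 ([:0,0,1:] * T) + smult (\<epsilon>/2) ([:-1,1:]^2)"
  have pp: "poly p t = 2 * t^2 * poly T t + \<epsilon>/2 * (t - 1)^2" for t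
    unfolding p_def by (simp add: power2_eq_square algebra_simps)
  have part1: "\<forall>t. 0 \<le> t \<and> t \<le> 1 / sqrt (Min (\<pi> ` {..<n})) \<longrightarrow> poly p t \<ge> 2 * t\<^sup>2 * pade_log m t"
  proof (intro allI impI)
    fix t :: real assume t: "0 \<le> t \<and> t \<le> 1 / sqrt (Min (\<pi> ` {..<n}))"
    then have t': "0 \<le> t" "t \<le> M" unfolding M_def pm_def A_def by auto
    show "poly p t \<ge> 2 * t\<^sup>2 * pade_log m t"
      unfolding pp T_def using point_lower[OF M1 eps(1) m1 c1 c2 j1 jb t'] by simp
  qed
  have part2: "\<forall>x\<in>pi_sphere n \<pi>. (\<Sum>i<n. \<pi> i * poly p (x i)) \<le> (1 + \<epsilon>) * ent_sq n \<pi> x"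
  proof
    fix x assume x: "x \<in> pi_sphere n \<pi>"
    have xnn: "\<And>i. i < n \<Longrightarrow> 0 \<le> x i" and xn: "pi_norm2 n \<pi> x = 1"
      using x unfolding pi_sphere_def by auto
    have xs: "(\<Sum>i<n. \<pi> i * (x i)^2) = 1" using xn unfolding pi_norm2_def .
    have xM: "x i \<le> M" if i: "i < n" for i
    proof -
      have "\<pi> i * (x i)^2 \<le> (\<Sum>i<n. \<pi> i * (x i)^2)"
        by (rule member_le_sum) (use i pos in \<open>auto intro: mult_nonneg_nonneg\<close>)
      then have a: "\<pi> i * (x i)^2 \<le> 1" using xs by simp
      have "pm * (x i)^2 \<le> \<pi> i * (x i)^2" using pmle[OF i] by (intro mult_right_mono) auto
      then have "pm * (x i)^2 \<le> 1" using a by linarith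
      then have "(x i)^2 \<le> 1 / pm" using pmp by (simp add: field_simps)
      then have "(x i)^2 \<le> M^2" using M2 by simp
      moreover have "0 \<le> M" using M1 by linarith
      ultimately show ?thesis by (rule power2_le_imp_le)
    qed
    have "(\<Sum>i<n. \<pi> i * poly p (x i)) \<le> (\<Sum>i<n. \<pi> i * ((1 + \<epsilon>) * ((x i)^2 * ln ((x i)^2)) + \<epsilon> * (1 - (x i)^2)))"
    proof (rule sum_mono)
      fix i assume "i \<in> {..<n}"
      then have i: "i < n" by simp
      have "poly p (x i) \<le> (1 + \<epsilon>) * ((x i)^2 * ln ((x i)^2)) + \<epsilon> * (1 - (x i)^2)"
        unfolding pp T_def using point_upper[OF M1 eps(1) j1 jb xnn[OF i] xM[OF i]] .
      then show "\<pi> i * poly p (x i) \<le> \<pi> i * ((1 + \<epsilon>) * ((x i)^2 * ln ((x i)^2)) + \<epsilon> * (1 - (x i)^2))"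
        using pos i by (intro mult_left_mono) auto
    qed
    also have "\<dots> = (\<Sum>i<n. (1 + \<epsilon>) * (\<pi> i * (x i)^2 * ln ((x i)^2)) + (\<epsilon> * \<pi> i - \<epsilon> * (\<pi> i * (x i)^2)))"
      by (intro sum.cong refl) (simp add: algebra_simps)
    also have "\<dots> = (1 + \<epsilon>) * (\<Sum>i<n. \<pi> i * (x i)^2 * ln ((x i)^2)) + (\<epsilon> * (\<Sum>i<n. \<pi> i) - \<epsilon> * (\<Sum>i<n. \<pi> i * (x i)^2))"
      by (simp add: sum.distrib sum_subtractf sum_distrib_left)
    also have "\<dots> = (1 + \<epsilon>) * (\<Sum>i<n. \<pi> i * (x i)^2 * ln ((x i)^2))"
      using sum1 xs by simp
    also have "\<dots> = (1 + \<epsilon>) * ent_sq n \<pi> x"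
      unfolding ent_sq_def xn by simp
    finally show "(\<Sum>i<n. \<pi> i * poly p (x i)) \<le> (1 + \<epsilon>) * ent_sq n \<pi> x" .
  qed
  show ?thesis using part1 part2 by blast
qed


end
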